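(* Let $n,k$ be integers with $2\le 2k\le n-4$. Let $\eta=(\eta_1<\dots<\eta_l)\in\overline{\mathbb{D}}^{\,\mathrm{o}}_{2k+2}$, where $\overline{\mathbb{D}}^{\,\mathrm{o}}_{2k+2}=\mathbb{D}^{\,\mathrm{o}}_{2k+2}\setminus\{(1,2k+1)\}$ if $2k=n-4$ and $\overline{\mathbb{D}}^{\,\mathrm{o}}_{2k+2}=\mathbb{D}^{\,\mathrm{o}}_{2k+2}$ otherwise. Let $Y_{\eta^*}$ be the Young diagram whose main diagonal consists of exactly the cells $c_{1,1},\dots,c_{l+1,l+1}$ and which satisfies $h_{1,1}=2n-5$, $h_{i,i}=\eta_{l-(i-2)}$ for $2\le i\le l+1$, and $a(c_{i,i})=l(c_{i,i})$ for $1\le i\le l+1$. Let $\lambda$ be the partition whose parts are the hook lengths of the first-column cells of $Y_{\eta^*}$. Then: (1) $\lambda$ has exactly $n-2$ parts; (2) its largest part is $\lambda_{n-2}=2n-5$; (3) $\#\mathcal{M}_\lambda=n-3$.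
   Context: $\mathbb{D}^{\,\mathrm{o}}_N$ is the set of partitions of $N$ into distinct odd parts, i.e. sequences $(\eta_1<\dots<\eta_l)$ of odd positive integers with sum $N$ and $l\ge 2$. For a partition $\lambda=(\lambda_1<\dots<\lambda_t)$ into distinct parts, $\mathcal{M}_\lambda=\{1,\dots,\lambda_t\}\setminus\{\lambda_1,\dots,\lambda_t\}$. Young diagrams are in English convention: rows top to bottom, columns left to right, $c_{i,j}$ the cell in row $i$, column $j$; arm $a(c_{i,j})$ = number of cells to its right in its row, leg $l(c_{i,j})$ = number of cells below it in its column, hook length $h_{i,j}=a+l+1$. *)

theory Defs
  imports Main
begin

definition distinct_odd_parts :: "nat \<Rightarrow> nat list set" where
  "distinct_odd_parts N = {eta. sorted_wrt (<) eta \<and> (\<forall>x\<in>set eta. odd x)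
                                \<and> sum_list eta = N \<and> length eta \<ge> 2}"

text \<open>Young diagrams (English convention) as finite sets of cells (i,j),
  i = row, j = column, both 1-based, closed under moving up/left.\<close>
definition young_diagram :: "(nat \<times> nat) set \<Rightarrow> bool" where
  "young_diagram Y \<longleftrightarrow> finite Y \<and> (\<forall>(i,j)\<in>Y. 1 \<le> i \<and> 1 \<le> j) \<and>
     (\<forall>i j i' j'. (i,j) \<in> Y \<and> 1 \<le> i' \<and> i' \<le> i \<and> 1 \<le> j' \<and> j' \<le> j \<longrightarrow> (i',j') \<in> Y)"

definition arm :: "(nat \<times> nat) set \<Rightarrow> nat \<Rightarrow> nat \<Rightarrow> nat" where
  "arm Y i j = card {j'. j < j' \<and> (i,j') \<in> Y}"

definition leg :: "(nat \<times> nat) set \<Rightarrow> nat \<Rightarrow> nat \<Rightarrow> nat" where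
  "leg Y i j = card {i'. i < i' \<and> (i',j) \<in> Y}"

definition hook :: "(nat \<times> nat) set \<Rightarrow> nat \<Rightarrow> nat \<Rightarrow> nat" where
  "hook Y i j = arm Y i j + leg Y i j + 1"

definition num_rows :: "(nat \<times> nat) set \<Rightarrow> nat" where
  "num_rows Y = card {i. (i,1) \<in> Y}"

definition first_col_hook_partition :: "(nat \<times> nat) set \<Rightarrow> nat list" where
  "first_col_hook_partition Y = sort (map (\<lambda>i. hook Y i 1) [1..<Suc (num_rows Y)])"

definition missing_set :: "nat list \<Rightarrow> nat set" where
  "missing_set lam = {1..last lam} - set lam"

end

theory Submission
  imports Defs "HOL-Library.Multiset"
begin

lemma col_is_interval:
  assumes Y: "young_diagram Y"
  shows "{i. (i,1) \<in> Y} = {1..card {i. (i,1) \<in> Y}}"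
proof -
  let ?C = "{i. (i,1) \<in> Y}"
  have fin: "finite ?C"
  proof -
    have "?C = fst ` (Y \<inter> {p. snd p = 1})" by force
    thus ?thesis using Y unfolding young_diagram_def by auto
  qed
  have pos: "\<And>i. i \<in> ?C \<Longrightarrow> 1 \<le> i" using Y unfolding young_diagram_def by auto
  have down: "\<And>i i'. i \<in> ?C \<Longrightarrow> 1 \<le> i' \<Longrightarrow> i' \<le> i \<Longrightarrow> i' \<in> ?C"
    using Y unfolding young_diagram_def by blast
  show ?thesis
  proof (cases "?C = {}")
    case True thus ?thesis by simp
  next
    case False
    define r where "r = Max ?C"
    have "r \<in> ?C" using False fin r_def Max_in by blast
    have "?C = {1..r}"
    proof
      show "?C \<subseteq> {1..r}" using pos fin r_def by auto
      show "{1..r} \<subseteq> ?C" using down \<open>r \<in> ?C\<close> by auto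
    qed
    thus ?thesis by simp
  qed
qed

lemma card_diff_sub:
  assumes "finite A" "B \<subseteq> A" shows "card (A - B) = card A - card B"
  using assms by (simp add: card_Diff_subset finite_subset)

theorem corollary4p9:
  fixes n k :: nat and eta :: "nat list" and Y :: "(nat \<times> nat) set"
  assumes "2 \<le> 2 * k" and "2 * k + 4 \<le> n"
    and "eta \<in> (if 2 * k + 4 = n then distinct_odd_parts (2 * k + 2) - {[1, 2 * k + 1]}
                 else distinct_odd_parts (2 * k + 2))"
    and "young_diagram Y"
    and "{(i, j) \<in> Y. i = j} = {(i, i) | i. 1 \<le> i \<and> i \<le> length eta + 1}"
    and "hook Y 1 1 = 2 * n - 5"
    and "\<forall>i. 2 \<le> i \<and> i \<le> length eta + 1 \<longrightarrow>
           hook Y i i = eta ! (length eta - (i - 2) - 1)"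
    and "\<forall>i. 1 \<le> i \<and> i \<le> length eta + 1 \<longrightarrow> arm Y i i = leg Y i i"
  shows "length (first_col_hook_partition Y) = n - 2
         \<and> first_col_hook_partition Y ! (n - 3) = 2 * n - 5
         \<and> card (missing_set (first_col_hook_partition Y)) = n - 3"
proof -
  have n6: "n \<ge> 6" using assms(1,2) by linarith
  have Y: "young_diagram Y" by fact
  have al: "arm Y 1 1 = leg Y 1 1" using assms(8) by simp
  have leg1: "leg Y 1 1 = n - 3" using assms(6) al n6 unfolding hook_def by linarith
  define r where "r = num_rows Y"
  have C: "{i. (i,1) \<in> Y} = {1..r}" using col_is_interval[OF Y] unfolding r_def num_rows_def .
  have legi: "leg Y i 1 = r - i" if "1 \<le> i" for i
  proof -
    have "{i'. i < i' \<and> (i',1) \<in> Y} = {i+1..r}" using C that by auto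
    thus ?thesis unfolding leg_def by simp
  qed
  have r: "r = n - 2" using legi[of 1] leg1 n6 by simp
  define h where "h = (\<lambda>i. hook Y i 1)"
  have finY: "finite Y" using Y unfolding young_diagram_def by simp
  have armmono: "arm Y i' 1 \<le> arm Y i 1" if "1 \<le> i" "i \<le> i'" for i i'
  proof -
    have fin: "finite {j'. 1 < j' \<and> (i,j') \<in> Y}"
    proof -
      have "{j'. 1 < j' \<and> (i,j') \<in> Y} \<subseteq> snd ` Y" by force
      thus ?thesis using finY finite_subset by blast
    qed
    have "{j'. 1 < j' \<and> (i',j') \<in> Y} \<subseteq> {j'. 1 < j' \<and> (i,j') \<in> Y}"
    proof
      fix x assume "x \<in> {j'. 1 < j' \<and> (i',j') \<in> Y}"
      then show "x \<in> {j'. 1 < j' \<and> (i,j') \<in> Y}"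
        using Y that unfolding young_diagram_def by (metis (no_types, lifting) le_refl less_imp_le mem_Collect_eq)
    qed
    thus ?thesis unfolding arm_def using card_mono fin by blast
  qed
  have hdec: "h i' < h i" if "1 \<le> i" "i < i'" "i' \<le> r" for i i'
    using armmono[of i i'] legi[of i] legi[of i'] that unfolding h_def hook_def by simp
  have h1: "h 1 = 2 * n - 5" using assms(6) unfolding h_def
    by (metis hook_def al leg1 legi[of 1] order_refl)
  have hge: "h i \<ge> 1" for i unfolding h_def hook_def by simp
  define xs where "xs = map h [1..<Suc r]"
  have sw: "sorted_wrt (>) xs" unfolding xs_def sorted_wrt_map
    by (auto simp del: upt_Suc simp: sorted_wrt_iff_nth_less intro!: hdec)
  have srt: "sorted (rev xs)" using sw
    by (simp add: sorted_wrt_rev sorted_wrt_mono_rel[of _ "(\<lambda>x y. y < x)"])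
  have lam: "first_col_hook_partition Y = rev xs"
    unfolding first_col_hook_partition_def xs_def[symmetric] r_def[symmetric] h_def[symmetric]
    using properties_for_sort[of "rev xs" xs] srt by simp
  have len: "length xs = n - 2" unfolding xs_def using r n6 by (simp del: upt_Suc)
  have dist: "distinct xs" using sw
    by (metis distinct_rev sorted_wrt_rev strict_sorted_iff)
  have last: "rev xs ! (n - 3) = 2 * n - 5"
  proof -
    have e: "n - 2 - Suc (n - 3) = 0" "n - 3 < n - 2" using n6 by auto
    show ?thesis using len e h1 by (simp add: rev_nth xs_def r del: upt_Suc)
  qed
  have setx: "set xs = h ` {1..r}" unfolding xs_def by auto
  have sub: "set xs \<subseteq> {1..2*n-5}"
  proof
    fix x assume "x \<in> set xs"
    then obtain i where "1 \<le> i" "i \<le> r" "x = h i" using setx by auto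
    thus "x \<in> {1..2*n-5}" using hdec[of 1 i] hge h1 n6 by (cases "i = 1") auto
  qed
  have lastl: "last (rev xs) = 2 * n - 5"
  proof -
    have "rev xs \<noteq> []" "length (rev xs) - 1 = n - 3" using len n6 by auto
    thus ?thesis using last last_conv_nth[of "rev xs"] by metis
  qed
  have "card (missing_set (rev xs)) = n - 3"
    unfolding missing_set_def lastl using sub dist len n6
    by (simp add: card_Diff_subset distinct_card)
  thus ?thesis using lam len last by simp
qed

end
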